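(* Fix $s>0$ and let $\Phi_s(x)=(1+e^{-sx})^{-1}$ be the sigmoid function and $\phi_s(x)=\Phi_s'(x)=se^{-sx}/(1+e^{-sx})^2$ the logistic density. Let $f:\mathbb{R}^3\to\mathbb{R}$ be a signed distance function (positive outside, negative inside) whose zero-level set $\{f=0\}$ is a smooth surface $\mathbb{S}$. Let $\mathbf{p}(t)=\mathbf{o}+t\mathbf{v}$, $t\ge 0$, be a ray with $\mathbf{o}\in\mathbb{R}^3$ and unit vector $\mathbf{v}$, and define the opaque density $$\rho(t)=\max\left(\frac{-\frac{\mathrm{d}}{\mathrm{d}t}\big[\Phi_s(f(\mathbf{p}(t)))\big]}{\Phi_s(f(\mathbf{p}(t)))},\,0\right),$$ the transmittance $T(t)=\exp\left(-\int_0^t\rho(u)\,\mathrm{d}u\right)$, and the weight $w(t)=T(t)\rho(t)$. Suppose the ray enters $\mathbb{S}$ from outside to inside at $\mathbf{p}(t^* )$, i.e. $f(\mathbf{p}(t^* ))=0$, and that there is an interval $[t_l,t_r]$ with $t^*\in[t_l,t_r]$ on which $t\mapsto f(\mathbf{p}(t))$ is monotonically decreasing. Suppose further that on this interval the surface is tangentially approximated by a planar patch, i.e. $\nabla f(\mathbf{p}(t))$ is constant for $t\in[t_l,t_r]$. Then the restriction of $w$ to $[t_l,t_r]$ attains its maximum at $t^*$.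
   Context: No surface intersections or other assumptions are imposed on the ray before $t_l$ (the ray may cross the surface several times before $t_l$). *)

theory Defs
  imports "HOL-Analysis.Analysis"
begin

definition sigmoid :: "real \<Rightarrow> real \<Rightarrow> real" where
  "sigmoid s x = 1 / (1 + exp (- s * x))"

definition logistic_density :: "real \<Rightarrow> real \<Rightarrow> real" where
  "logistic_density s x = s * exp (- s * x) / (1 + exp (- s * x))^2"

definition signed_distance_function :: "(real^3 \<Rightarrow> real) \<Rightarrow> bool" where
  "signed_distance_function f \<longleftrightarrow> (\<forall>x. \<bar>f x\<bar> = infdist x {y. f y = 0})"

definition ray :: "real^3 \<Rightarrow> real^3 \<Rightarrow> real \<Rightarrow> real^3" where
  "ray orig v t = orig + t *\<^sub>R v"

definition opaque_density ::
  "real \<Rightarrow> (real^3 \<Rightarrow> real) \<Rightarrow> real^3 \<Rightarrow> real^3 \<Rightarrow> real \<Rightarrow> real" where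
  "opaque_density s f orig v t =
     max (- deriv (\<lambda>u. sigmoid s (f (ray orig v u))) t / sigmoid s (f (ray orig v t))) 0"

definition transmittance ::
  "real \<Rightarrow> (real^3 \<Rightarrow> real) \<Rightarrow> real^3 \<Rightarrow> real^3 \<Rightarrow> real \<Rightarrow> real" where
  "transmittance s f orig v t = exp (- integral {0..t} (opaque_density s f orig v))"

definition render_weight ::
  "real \<Rightarrow> (real^3 \<Rightarrow> real) \<Rightarrow> real^3 \<Rightarrow> real^3 \<Rightarrow> real \<Rightarrow> real" where
  "render_weight s f orig v t = transmittance s f orig v t * opaque_density s f orig v t"

end

theory Submission
  imports Defs
begin

lemma sigmoid_pos: "sigmoid s x > 0"
  unfolding sigmoid_def by (simp add: add_pos_pos)

lemma sigmoid_deriv: "((\<lambda>x. sigmoid s x) has_real_derivative logistic_density s x) (at x)"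
proof -
  have "((\<lambda>x. 1 / (1 + exp (- s * x))) has_real_derivative
        - (exp (- s * x) * (- s)) / (1 + exp (- s * x))^2) (at x)"
    by (auto intro!: derivative_eq_intros simp: power2_eq_square add_pos_pos
             simp del: minus_mult_commute minus_mult_left)
       (metis add_pos_pos exp_gt_zero less_irrefl zero_less_one)
  then show ?thesis unfolding sigmoid_def logistic_density_def by (simp add: mult.commute)
qed

lemma density_le: "s > 0 \<Longrightarrow> logistic_density s x \<le> logistic_density s 0"
proof -
  assume s: "s > 0"
  define y where "y = exp (- s * x)"
  have y: "y > 0" unfolding y_def by simp
  have "(1 + y)^2 - 4 * y = (1 - y)^2" by (simp add: power2_eq_square algebra_simps)
  hence "4 * y \<le> (1 + y)^2" by (metis diff_ge_0_iff_ge zero_le_power2)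
  hence "y / (1 + y)^2 \<le> 1 / 4" using y by (simp add: field_simps)
  hence "s * (y / (1 + y)^2) \<le> s * (1/4)" using s by (intro mult_left_mono) auto
  thus ?thesis unfolding logistic_density_def y_def[symmetric] by simp
qed

theorem theorem1:
  fixes s :: real and f :: "real^3 \<Rightarrow> real" and orig v :: "real^3"
    and tl tr tstar :: real
  assumes s_pos: "s > 0"
    and sdf: "signed_distance_function f"
    and unit: "norm v = 1"
    and tl_nonneg: "0 \<le> tl"
    and tstar_in: "tstar \<in> {tl..tr}"
    and zero: "f (ray orig v tstar) = 0"
    and decr: "\<forall>x y. tl \<le> x \<longrightarrow> x \<le> y \<longrightarrow> y \<le> tr \<longrightarrow>
                  f (ray orig v y) \<le> f (ray orig v x)"
    and planar: "\<exists>g. \<forall>t\<in>{tl..tr}. GDERIV f (ray orig v t) :> g"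
    and rho_int: "\<forall>t\<ge>0. opaque_density s f orig v integrable_on {0..t}"
  shows "\<forall>t\<in>{tl..tr}. render_weight s f orig v t \<le> render_weight s f orig v tstar"
proof
  fix t assume t: "t \<in> {tl..tr}"
  obtain g where g: "\<And>t. t\<in>{tl..tr} \<Longrightarrow> GDERIV f (ray orig v t) :> g" using planar by blast
  define h where "h u = f (ray orig v u)" for u
  define c where "c = inner v g"
  have hd: "(h has_real_derivative c) (at u)" if "u \<in> {tl..tr}" for u
  proof -
    have r: "(ray orig v has_derivative (\<lambda>x. x *\<^sub>R v)) (at u)"
      unfolding ray_def by (auto intro!: derivative_eq_intros)
    have "(f has_derivative (\<lambda>x. inner x g)) (at (ray orig v u))"
      using g[OF that] by (simp add: gderiv_def)
    from has_derivative_compose[OF r this]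
    have "(h has_derivative (\<lambda>x. inner (x *\<^sub>R v) g)) (at u)"
      unfolding h_def o_def by simp
    moreover have "(\<lambda>x::real. x * (v \<bullet> g)) = (*) (v \<bullet> g)" by (rule ext) simp
    ultimately show ?thesis unfolding has_field_derivative_def c_def
      by simp
  qed
  have lin: "h u = c * (u - tstar)" if "u \<in> {tl..tr}" for u
  proof -
    have "\<exists>k. \<forall>x\<in>{tl..tr}. h x - c * (x - tstar) = k"
      by (rule has_field_derivative_zero_constant)
         (auto intro!: derivative_eq_intros has_field_derivative_at_within[OF hd])
    then obtain k where k: "\<And>x. x\<in>{tl..tr} \<Longrightarrow> h x - c * (x - tstar) = k" by blast
    have "k = 0" using k[OF tstar_in] zero by (simp add: h_def)
    thus ?thesis using k[OF that] by simp
  qed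
  show "render_weight s f orig v t \<le> render_weight s f orig v tstar"
  proof (cases "tl < tr")
    case False
    then have "t = tstar" using t tstar_in by auto
    thus ?thesis by simp
  next
    case True
    have "h tr \<le> h tl" using decr True unfolding h_def by auto
    have c: "c \<le> 0"
    proof -
      have "c * (tr - tl) \<le> 0" using \<open>h tr \<le> h tl\<close> lin[of tr] lin[of tl] True
        by (simp add: algebra_simps)
      thus ?thesis using True by (simp add: mult_le_0_iff)
    qed
    have sd: "((\<lambda>u. sigmoid s (h u)) has_real_derivative logistic_density s (h u) * c) (at u)"
      if "u \<in> {tl..tr}" for u
      using DERIV_chain2[OF sigmoid_deriv hd[OF that]] by simp
    have rho: "opaque_density s f orig v u = - c * logistic_density s (h u) / sigmoid s (h u)"
      if "u \<in> {tl..tr}" for u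
    proof -
      have "deriv (\<lambda>u. sigmoid s (h u)) u = logistic_density s (h u) * c"
        using sd[OF that] by (rule DERIV_imp_deriv)
      moreover have "logistic_density s (h u) \<ge> 0" unfolding logistic_density_def
        using s_pos by simp
      moreover have "- (logistic_density s (h u) * c) / sigmoid s (h u) \<ge> 0"
        using sigmoid_pos[of s "h u"] c calculation(2)
        by (intro divide_nonneg_pos) (auto simp: mult_nonneg_nonpos)
      ultimately show ?thesis unfolding opaque_density_def h_def[symmetric]
        by (simp add: max_absorb1 mult.commute)
    qed
    define L where "L u = - ln (sigmoid s (h u))" for u
    have Ld: "(L has_real_derivative - c * logistic_density s (h u) / sigmoid s (h u)) (at u)"
      if "u \<in> {tl..tr}" for u
    proof -
      have "((\<lambda>u. - ln (sigmoid s (h u))) has_real_derivative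
             - (inverse (sigmoid s (h u)) * (logistic_density s (h u) * c))) (at u)"
        using DERIV_minus[OF DERIV_chain2[OF DERIV_ln[OF sigmoid_pos] sd[OF that]]]
        by simp
      thus ?thesis unfolding L_def by (simp add: field_simps)
    qed
    have intL: "integral {tl..u} (opaque_density s f orig v) = L u - L tl"
      if "u \<in> {tl..tr}" for u
    proof -
      have "((\<lambda>x. - c * logistic_density s (h x) / sigmoid s (h x)) has_integral L u - L tl) {tl..u}"
      proof (rule fundamental_theorem_of_calculus)
        show "tl \<le> u" using that by simp
        fix x assume x: "x \<in> {tl..u}"
        hence "x \<in> {tl..tr}" using that by simp
        from Ld[OF this] show "(L has_vector_derivative
            - c * logistic_density s (h x) / sigmoid s (h x)) (at x within {tl..u})"
          unfolding has_real_derivative_iff_has_vector_derivative[symmetric]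
          by (rule has_field_derivative_at_within)
      qed
      note I1 = this
      have E1: "- c * logistic_density s (h x) / sigmoid s (h x) = opaque_density s f orig v x"
        if "x \<in> {tl..u}" for x
        using rho[of x] that \<open>u \<in> {tl..tr}\<close> by simp
      have "(opaque_density s f orig v has_integral L u - L tl) {tl..u}"
        by (rule has_integral_eq[OF E1 I1])
      thus ?thesis by (rule integral_unique)
    qed
    define A where "A = integral {0..tl} (opaque_density s f orig v)"
    have T: "transmittance s f orig v u = exp (- A) * sigmoid s (h u) / sigmoid s (h tl)"
      if "u \<in> {tl..tr}" for u
    proof -
      have "integral {0..u} (opaque_density s f orig v) = A + (L u - L tl)"
        unfolding A_def intL[OF that, symmetric]
        using Henstock_Kurzweil_Integration.integral_combine[of 0 tl u "opaque_density s f orig v"]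
          that tl_nonneg rho_int by auto
      hence "transmittance s f orig v u = exp (- A) * exp (- L u) / exp (- L tl)"
        unfolding transmittance_def by (simp add: exp_diff exp_add exp_minus field_simps
          flip: exp_add)
      thus ?thesis unfolding L_def using sigmoid_pos by simp
    qed
    define K where "K = exp (- A) / sigmoid s (h tl) * (- c)"
    have K: "K \<ge> 0" unfolding K_def using c sigmoid_pos[of s "h tl"]
      by (intro mult_nonneg_nonneg divide_nonneg_pos) auto
    have W: "render_weight s f orig v u = K * logistic_density s (h u)" if "u \<in> {tl..tr}" for u
      unfolding render_weight_def T[OF that] rho[OF that] K_def
      using sigmoid_pos[of s "h u"] by (simp add: field_simps)
    have "h tstar = 0" using zero h_def by simp
    thus ?thesis unfolding W[OF t] W[OF tstar_in]
      using density_le[OF s_pos, of "h t"] K by (simp add: mult_left_mono)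
  qed
qed

end
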